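(* Let $n\ge1$ and let $M=M(h)$ be an $n\times n$ complex matrix of the form $M=D(I_n+E(h))D$, where $D(h)=\operatorname{diag}(\nu_j(h))$ is diagonal with $\nu_j(h)\in\mathbb C$ and $E(h)=\mathcal O(h^\infty)$ as $h\to0$. Then the eigenvalues of $M$ are of the form $\nu_j^2(h)(1+\mathcal O(h^\infty))$.
   Context: $E(h)=\mathcal O(h^\infty)$ means that for every $N$ there is $C_N$ with $\|E(h)\|\le C_Nh^N$ for $h$ small enough. *)

theory Defs
  imports "HOL-Analysis.Analysis"
begin

definition diag_mat :: "('n::finite \<Rightarrow> complex) \<Rightarrow> complex^'n^'n" where
  "diag_mat d = (\<chi> i j. if i = j then d j else 0)"

text \<open>lam enumerates the eigenvalues of A counted with algebraic multiplicity,
  i.e. the characteristic polynomial det (x I - A) factors as the product of (x - lam j).\<close>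
definition eigenvalues_enum :: "complex^'n^'n \<Rightarrow> ('n::finite \<Rightarrow> complex) \<Rightarrow> bool" where
  "eigenvalues_enum A lam \<longleftrightarrow> (\<forall>x. det (mat x - A) = (\<Prod>j\<in>UNIV. x - lam j))"

definition O_h_infty :: "(real \<Rightarrow> 'a::real_normed_vector) \<Rightarrow> bool" where
  "O_h_infty f \<longleftrightarrow> (\<forall>N::nat. \<exists>C. \<forall>\<^sub>F h in at_right 0. norm (f h) \<le> C * h ^ N)"

end

theory Submission
  imports Defs "HOL-Computational_Algebra.Fundamental_Theorem_Algebra"
begin

definition pdom :: "complex poly \<Rightarrow> real poly \<Rightarrow> bool" where
  "pdom g G \<longleftrightarrow> (\<forall>k. cmod (coeff g k) \<le> coeff G k)"

definition cle :: "real poly \<Rightarrow> real poly \<Rightarrow> bool" where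
  "cle F G \<longleftrightarrow> (\<forall>k. coeff F k \<le> coeff G k)"

definition nneg :: "real poly \<Rightarrow> bool" where
  "nneg F \<longleftrightarrow> (\<forall>k. 0 \<le> coeff F k)"

lemma pdom_nneg: "pdom g G \<Longrightarrow> nneg G"
  unfolding pdom_def nneg_def by (meson norm_ge_zero order_trans)

lemma pdom_add: "pdom f F \<Longrightarrow> pdom g G \<Longrightarrow> pdom (f + g) (F + G)"
  unfolding pdom_def by (simp add: add_mono norm_triangle_le)

lemma pdom_diff: "pdom f F \<Longrightarrow> pdom g G \<Longrightarrow> pdom (f - g) (F + G)"
  unfolding pdom_def by (simp add: add_mono norm_triangle_le_diff)

lemma pdom_minus: "pdom f F \<Longrightarrow> pdom (- f) F"
  unfolding pdom_def by simp

lemma pdom_mult: "pdom f F \<Longrightarrow> pdom g G \<Longrightarrow> pdom (f * g) (F * G)"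
proof -
  assume a: "pdom f F" "pdom g G"
  show ?thesis unfolding pdom_def
  proof
    fix k
    have "cmod (coeff (f*g) k) \<le> (\<Sum>i\<le>k. cmod (coeff f i * coeff g (k - i)))"
      unfolding coeff_mult by (rule norm_sum)
    also have "\<dots> \<le> (\<Sum>i\<le>k. coeff F i * coeff G (k - i))"
      apply (rule sum_mono) unfolding norm_mult
      apply (rule mult_mono) using a pdom_nneg[OF a(1)] unfolding pdom_def nneg_def by auto
    finally show "cmod (coeff (f * g) k) \<le> coeff (F * G) k" unfolding coeff_mult .
  qed
qed

lemma pdom_const: "pdom [:c:] [:cmod c:]"
  unfolding pdom_def by (simp add: coeff_pCons split: nat.split)

lemma pdom_lin: "pdom [:c, 1:] [:cmod c, 1:]"
  unfolding pdom_def by (simp add: coeff_pCons split: nat.split)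

lemma pdom_one: "pdom 1 1"
  by (auto simp: pdom_def one_pCons coeff_pCons split: nat.split)
lemma pdom_zero: "pdom 0 0"
  by (auto simp: pdom_def)
lemma nneg_one: "nneg 1"
  by (auto simp: nneg_def one_pCons coeff_pCons split: nat.split)

lemma pdom_prod: "finite A \<Longrightarrow> (\<And>i. i \<in> A \<Longrightarrow> pdom (f i) (F i)) \<Longrightarrow> pdom (\<Prod>i\<in>A. f i) (\<Prod>i\<in>A. F i)"
  by (induction A rule: finite_induct) (auto simp: pdom_one intro: pdom_mult)

lemma pdom_sum: "finite A \<Longrightarrow> (\<And>i. i \<in> A \<Longrightarrow> pdom (f i) (F i)) \<Longrightarrow> pdom (\<Sum>i\<in>A. f i) (\<Sum>i\<in>A. F i)"
  by (induction A rule: finite_induct) (auto simp: pdom_zero intro: pdom_add)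

lemma pdom_smult: "pdom f F \<Longrightarrow> pdom (smult c f) (smult (cmod c) F)"
  unfolding pdom_def by (simp add: norm_mult mult_left_mono)

lemma pdom_cle: "pdom f F \<Longrightarrow> cle F G \<Longrightarrow> pdom f G"
  unfolding pdom_def cle_def by (meson order_trans)

lemma cle_refl: "cle F F" unfolding cle_def by simp
lemma cle_trans: "cle F G \<Longrightarrow> cle G H \<Longrightarrow> cle F H" unfolding cle_def by (meson order_trans)
lemma cle_add: "cle F F' \<Longrightarrow> cle G G' \<Longrightarrow> cle (F + G) (F' + G')" unfolding cle_def by (simp add: add_mono)
lemma cle_smult: "0 \<le> c \<Longrightarrow> cle F G \<Longrightarrow> cle (smult c F) (smult c G)" unfolding cle_def by (simp add: mult_left_mono)
lemma cle_smult2: "nneg F \<Longrightarrow> c \<le> d \<Longrightarrow> cle (smult c F) (smult d F)" unfolding cle_def nneg_def by (simp add: mult_right_mono)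

lemma nneg_mult: "nneg F \<Longrightarrow> nneg G \<Longrightarrow> nneg (F * G)"
  unfolding nneg_def coeff_mult by (simp add: sum_nonneg)
lemma nneg_prod: "finite A \<Longrightarrow> (\<And>i. i \<in> A \<Longrightarrow> nneg (F i)) \<Longrightarrow> nneg (\<Prod>i\<in>A. F i)"
  by (induction A rule: finite_induct) (auto simp: nneg_one intro: nneg_mult)

lemma cle_mult: "nneg F \<Longrightarrow> nneg G \<Longrightarrow> cle F F' \<Longrightarrow> cle G G' \<Longrightarrow> cle (F * G) (F' * G')"
  unfolding cle_def nneg_def coeff_mult
  by (intro allI sum_mono mult_mono) (auto intro: order_trans)

lemma cle_prod: "finite A \<Longrightarrow> (\<And>i. i \<in> A \<Longrightarrow> nneg (F i)) \<Longrightarrow> (\<And>i. i \<in> A \<Longrightarrow> cle (F i) (G i))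
   \<Longrightarrow> cle (\<Prod>i\<in>A. F i) (\<Prod>i\<in>A. G i)"
proof (induction A rule: finite_induct)
  case empty then show ?case by (simp add: cle_refl)
next
  case (insert x A)
  have "nneg (F x)" using insert.prems by auto
  moreover have "nneg (\<Prod>i\<in>A. F i)" using insert by (intro nneg_prod) auto
  ultimately show ?case using insert by (simp add: cle_mult)
qed



lemma poly_sum_N: fixes x :: "'a::{comm_semiring_0,semiring_1}" assumes "degree p \<le> N" shows "poly p x = (\<Sum>i\<le>N. coeff p i * x ^ i)"
proof -
  have "poly p x = (\<Sum>i\<le>degree p. coeff p i * x ^ i)" by (rule poly_altdef)
  also have "\<dots> = (\<Sum>i\<le>N. coeff p i * x ^ i)"
    by (rule sum.mono_neutral_left) (use assms in \<open>auto simp: coeff_eq_0\<close>)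
  finally show ?thesis .
qed

lemma pdom_degree: "pdom g G \<Longrightarrow> degree g \<le> degree G"
proof -
  assume "pdom g G"
  then have "coeff g k = 0" if "k > degree G" for k
    using that unfolding pdom_def by (metis coeff_eq_0 norm_le_zero_iff)
  then show ?thesis by (meson degree_le leI)
qed

lemma pdom_poly: "pdom g G \<Longrightarrow> cmod (poly g z) \<le> poly G (cmod z)"
proof -
  assume a: "pdom g G"
  have "poly g z = (\<Sum>i\<le>degree G. coeff g i * z ^ i)"
    by (rule poly_sum_N) (rule pdom_degree[OF a])
  then have "cmod (poly g z) \<le> (\<Sum>i\<le>degree G. cmod (coeff g i * z ^ i))"
    by (simp add: norm_sum)
  also have "\<dots> \<le> (\<Sum>i\<le>degree G. coeff G i * cmod z ^ i)"
    using a unfolding pdom_def by (intro sum_mono) (simp add: norm_mult norm_power mult_right_mono)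
  also have "\<dots> = poly G (cmod z)" by (simp add: poly_altdef)
  finally show ?thesis .
qed

lemma coeff_lin_mult: "coeff ([:t::real, 1:] * H) i = t * coeff H i + (case i of 0 \<Rightarrow> 0 | Suc j \<Rightarrow> coeff H j)"
  by (cases i) (auto simp: coeff_pCons)

lemma coeff_G_bound:
  fixes t :: "'a \<Rightarrow> real"
  assumes "finite J" "\<And>j. j \<in> J \<Longrightarrow> 0 \<le> t j \<and> t j \<le> A"
  shows "\<forall>i k. i \<le> k \<longrightarrow> k \<le> card J \<longrightarrow>
     coeff (\<Prod>j\<in>J. [:t j, 1:]) i \<le> 2 ^ card J * A ^ (k - i) * coeff (\<Prod>j\<in>J. [:t j, 1:]) k"
  using assms(1,2)
proof (induction J rule: finite_induct)
  case empty
  then show ?case by auto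
next
  case (insert x J)
  define H where "H = (\<Prod>j\<in>J. [:t j, 1:])"
  define d where "d = card J"
  have nnH: "nneg H" unfolding H_def using insert.prems insert.hyps
    by (intro nneg_prod) (auto simp: nneg_def coeff_pCons split: nat.split)
  have A0: "0 \<le> A" using insert.prems by (meson insertI1 order_trans)
  have tx: "0 \<le> t x" "t x \<le> A" using insert.prems by auto
  have IH: "\<And>i k. i \<le> k \<Longrightarrow> k \<le> d \<Longrightarrow> coeff H i \<le> 2 ^ d * A ^ (k - i) * coeff H k"
    using insert.IH insert.prems by (auto simp: H_def d_def)
  have Hd: "coeff H k = 0" if "k > d" for k
  proof -
    have "degree H \<le> d" unfolding H_def d_def
      using degree_prod_sum_le[OF insert.hyps(1), of "\<lambda>j. [:t j, 1:]"] by simp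
    then show ?thesis using that by (simp add: coeff_eq_0)
  qed
  have G: "(\<Prod>j\<in>insert x J. [:t j, 1:]) = [:t x, 1:] * H"
    using insert by (simp add: H_def)
  have card: "card (insert x J) = Suc d" using insert by (simp add: d_def)
  show ?case unfolding G card
  proof (intro allI impI)
    fix i k assume ik: "i \<le> k" "k \<le> Suc d"
    let ?L = "\<lambda>i. (case i of 0 \<Rightarrow> 0 | Suc j \<Rightarrow> coeff H j)"
    have Lnn: "0 \<le> ?L i" for i using nnH by (auto simp: nneg_def split: nat.split)
    have Hnn: "0 \<le> coeff H i" for i using nnH by (auto simp: nneg_def)
    have pw: "0 \<le> (2::real) ^ d * A ^ j" for j using A0 by simp
    show "coeff ([:t x, 1:] * H) i \<le> 2 ^ Suc d * A ^ (k - i) * coeff ([:t x, 1:] * H) k"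
      unfolding coeff_lin_mult
    proof (cases "k \<le> d")
      case True
      have 1: "t x * coeff H i \<le> t x * (2 ^ d * A ^ (k - i) * coeff H k)"
        using IH[OF ik(1) True] tx by (simp add: mult_left_mono)
      have 2: "?L i \<le> 2 ^ d * A ^ (k - i) * ?L k"
      proof (cases i)
        case 0 then show ?thesis using Lnn pw by (simp add: zero_le_mult_iff)
      next
        case (Suc i')
        then obtain k' where k': "k = Suc k'" using ik by (cases k) auto
        show ?thesis using IH[of i' k'] ik True Suc k' by simp
      qed
      have "t x * coeff H i + ?L i \<le> 2 ^ d * A ^ (k - i) * (t x * coeff H k + ?L k)"
        using 1 2 by (simp add: algebra_simps)
      also have "\<dots> \<le> 2 ^ Suc d * A ^ (k - i) * (t x * coeff H k + ?L k)"
        using tx Hnn Lnn A0 by (intro mult_right_mono) (auto intro!: add_nonneg_nonneg)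
      finally show "t x * coeff H i + ?L i \<le> 2 ^ Suc d * A ^ (k - i) * (t x * coeff H k + ?L k)" .
    next
      case False
      then have k: "k = Suc d" using ik by simp
      have Gk: "t x * coeff H k + ?L k = coeff H d" using Hd k by simp
      show "t x * coeff H i + ?L i \<le> 2 ^ Suc d * A ^ (k - i) * (t x * coeff H k + ?L k)"
      proof (cases "i = k")
        case True
        have "(1::real) \<le> 2 ^ Suc d" using one_le_power[of "2::real" "Suc d"] by simp
        from mult_right_mono[OF this Hnn[of d]]
        show ?thesis using Gk Hd k True by simp
      next
        case False
        then have id: "i \<le> d" using ik k by simp
        have 1: "t x * coeff H i \<le> 2 ^ d * A ^ (k - i) * coeff H d"
        proof -
          have "t x * coeff H i \<le> A * coeff H i" using tx Hnn by (simp add: mult_right_mono)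
          also have "\<dots> \<le> A * (2 ^ d * A ^ (d - i) * coeff H d)"
            using IH[OF id order_refl] A0 by (simp add: mult_left_mono)
          also have "\<dots> = 2 ^ d * A ^ (k - i) * coeff H d"
            using id k by (simp add: Suc_diff_le algebra_simps)
          finally show ?thesis .
        qed
        have 2: "?L i \<le> 2 ^ d * A ^ (k - i) * coeff H d"
        proof (cases i)
          case 0 then show ?thesis using Hnn pw by (simp add: zero_le_mult_iff)
        next
          case (Suc i')
          then show ?thesis using IH[of i' d] id k by simp
        qed
        show ?thesis unfolding Gk using 1 2 by simp
      qed
    qed
  qed
qed



lemma coeff_lin_mult_c: "coeff ([:t::complex, 1:] * H) i = t * coeff H i + (case i of 0 \<Rightarrow> 0 | Suc j \<Rightarrow> coeff H j)"
  by (cases i) (auto simp: coeff_pCons)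

lemma div_bound:
  fixes R S :: "complex poly" and G :: "real poly"
  assumes RS: "[:-\<beta>, 1:] * R = S"
    and Sd: "pdom S (smult c ([:A, 1:] * G))"
    and A: "A > 0" and beta: "A / 2 \<le> cmod \<beta>"
    and Gb: "\<forall>i k. i \<le> k \<longrightarrow> k \<le> d \<longrightarrow> coeff G i \<le> 2^d * A^(k-i) * coeff G k"
    and degR: "degree R \<le> d" and nnG: "nneg G" and c: "0 \<le> c"
  shows "pdom R (smult (c * 2^(2*d+3)) G)"
  unfolding pdom_def
proof
  fix k
  have Gnn: "0 \<le> coeff G i" for i using nnG by (simp add: nneg_def)
  show "cmod (coeff R k) \<le> coeff (smult (c * 2 ^ (2 * d + 3)) G) k"
  proof (cases "k \<le> d")
    case False
    then have "coeff R k = 0" using degR by (simp add: coeff_eq_0)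
    then show ?thesis using Gnn c by simp
  next
    case kd: True
    define X where "X = c * 2^(d+1) * coeff G k"
    have X0: "0 \<le> X" using c Gnn by (simp add: X_def)
    let ?L = "\<lambda>i. (case i of 0 \<Rightarrow> 0 | Suc j \<Rightarrow> coeff R j)"
    have Sco: "coeff S i = - \<beta> * coeff R i + ?L i" for i
      using RS[symmetric] coeff_lin_mult_c[of "-\<beta>" R i] by simp
    have Sb: "cmod (coeff S i) \<le> X * A ^ (k - i + 1)" if ik: "i \<le> k" for i
    proof -
      have "cmod (coeff S i) \<le> c * (A * coeff G i + (case i of 0 \<Rightarrow> 0 | Suc j \<Rightarrow> coeff G j))"
        using Sd coeff_lin_mult[of A G i] unfolding pdom_def by (metis coeff_smult)
      also have "\<dots> \<le> c * (2^d * A^(k-i+1) * coeff G k + 2^d * A^(k-i+1) * coeff G k)"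
      proof (intro mult_left_mono add_mono c)
        have "A * coeff G i \<le> A * (2^d * A^(k-i) * coeff G k)"
          using Gb ik kd A by (intro mult_left_mono) auto
        then show "A * coeff G i \<le> 2^d * A^(k-i+1) * coeff G k" by (simp add: algebra_simps)
        show "(case i of 0 \<Rightarrow> 0 | Suc j \<Rightarrow> coeff G j) \<le> 2^d * A^(k-i+1) * coeff G k"
        proof (cases i)
          case 0 then show ?thesis using Gnn A by simp
        next
          case (Suc j)
          then have "coeff G j \<le> 2^d * A^(k-j) * coeff G k" using Gb ik kd by auto
          moreover have "k - j = k - i + 1" using Suc ik by simp
          ultimately show ?thesis using Suc by simp
        qed
      qed
      also have "\<dots> = X * A ^ (k - i + 1)" by (simp add: X_def algebra_simps)
      finally show ?thesis .
    qed
    have step: "A * cmod (coeff R i) \<le> 2 * (cmod (?L i) + cmod (coeff S i))" for i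
    proof -
      have "\<beta> * coeff R i = ?L i - coeff S i" using Sco[of i] by simp
      then have "cmod \<beta> * cmod (coeff R i) \<le> cmod (?L i) + cmod (coeff S i)"
        by (metis norm_mult norm_triangle_ineq4)
      moreover have "A / 2 * cmod (coeff R i) \<le> cmod \<beta> * cmod (coeff R i)"
        using beta by (intro mult_right_mono) auto
      ultimately show ?thesis by simp
    qed
    have claim: "i \<le> k \<Longrightarrow> cmod (coeff R i) \<le> X * A ^ (k - i) * (2 ^ (i + 2) - 2)" for i
    proof (induction i)
      case 0
      have "A * cmod (coeff R 0) \<le> 2 * (X * A ^ (k + 1))" using step[of 0] Sb[of 0] by simp
      then have "A * cmod (coeff R 0) \<le> A * (X * A ^ k * 2)" by (simp add: algebra_simps)
      then show ?case using A by simp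
    next
      case (Suc j)
      have IH: "cmod (coeff R j) \<le> X * A ^ (k - j) * (2 ^ (j + 2) - 2)" using Suc by simp
      have kj: "k - j = k - Suc j + 1" using Suc.prems by simp
      have "A * cmod (coeff R (Suc j)) \<le> 2 * (X * A ^ (k - Suc j + 1) * (2 ^ (j + 2) - 2) + X * A ^ (k - Suc j + 1))"
        using step[of "Suc j"] Sb[OF Suc.prems] IH kj by simp
      also have "\<dots> = A * (X * A ^ (k - Suc j) * (2 ^ (Suc j + 2) - 2))"
        by (simp add: algebra_simps)
      finally show ?case using A by simp
    qed
    have "cmod (coeff R k) \<le> X * (2 ^ (k + 2) - 2)" using claim[of k] by simp
    also have "\<dots> \<le> X * 2 ^ (d + 2)"
    proof (intro mult_left_mono X0)
      have "(2::real) ^ (k + 2) \<le> 2 ^ (d + 2)" by (rule power_increasing) (use kd in auto)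
      then show "(2::real) ^ (k + 2) - 2 \<le> 2 ^ (d + 2)" by linarith
    qed
    also have "\<dots> = coeff (smult (c * 2 ^ (2 * d + 3)) G) k"
      by (simp add: X_def power_add power_mult power2_eq_square algebra_simps)
    finally show ?thesis .
  qed
qed



definition pa :: "('a \<Rightarrow> complex) \<Rightarrow> 'a set \<Rightarrow> complex poly" where
  "pa a I = (\<Prod>i\<in>I. [:- a i, 1:])"
definition pm :: "('a \<Rightarrow> complex) \<Rightarrow> 'a set \<Rightarrow> real poly" where
  "pm a I = (\<Prod>i\<in>I. [:cmod (a i), 1:])"

lemma pa_poly: "poly (pa a I) z = (\<Prod>i\<in>I. z - a i)"
  by (simp add: pa_def poly_prod)
lemma pm_poly: "poly (pm a I) r = (\<Prod>i\<in>I. r + cmod (a i))"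
  by (simp add: pm_def poly_prod add.commute)
lemma pdom_pa: "finite I \<Longrightarrow> pdom (pa a I) (pm a I)"
  unfolding pa_def pm_def using pdom_lin[of "- a i" for i] by (intro pdom_prod) auto
lemma nneg_pm: "finite I \<Longrightarrow> nneg (pm a I)"
  using pdom_pa pdom_nneg by blast
lemma degree_pa: "finite I \<Longrightarrow> degree (pa a I) \<le> card I"
  unfolding pa_def using degree_prod_sum_le[of I "\<lambda>i. [:- a i, 1:]"] by simp
lemma pa_remove: "finite I \<Longrightarrow> j \<in> I \<Longrightarrow> pa a I = [:- a j, 1:] * pa a (I - {j})"
  unfolding pa_def by (simp add: prod.remove)
lemma pm_remove: "finite I \<Longrightarrow> j \<in> I \<Longrightarrow> pm a I = [:cmod (a j), 1:] * pm a (I - {j})"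
  unfolding pm_def by (simp add: prod.remove)
lemma pa_permute: "p permutes I \<Longrightarrow> pa (b \<circ> p) I = pa b I"
  unfolding pa_def using prod.permute[of p I "\<lambda>i. [:- b i, 1:]"] by (simp add: comp_def)

lemma finite_argmax:
  fixes f :: "'a \<Rightarrow> real"
  assumes "finite I" "I \<noteq> {}"
  obtains j where "j \<in> I" "\<And>i. i \<in> I \<Longrightarrow> f i \<le> f j"
proof -
  have "Max (f ` I) \<in> f ` I" using assms by simp
  then obtain j where "j \<in> I" "f j = Max (f ` I)" by auto
  then show ?thesis using that assms by (metis Max_ge finite_imageI imageI)
qed

lemma finite_argmin:
  fixes f :: "'a \<Rightarrow> real"
  assumes "finite I" "I \<noteq> {}"
  obtains j where "j \<in> I" "\<And>i. i \<in> I \<Longrightarrow> f j \<le> f i"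
proof -
  have "Min (f ` I) \<in> f ` I" using assms by simp
  then obtain j where "j \<in> I" "f j = Min (f ` I)" by auto
  then show ?thesis using that assms by (metis Min_le finite_imageI imageI)
qed



lemma match_step:
  fixes a b :: "'a \<Rightarrow> complex"
  assumes IH: "\<forall>(I::'a set) a b \<theta>. finite I \<longrightarrow> card I = m \<longrightarrow> 0 \<le> \<theta> \<longrightarrow> \<theta> \<le> \<theta>0' \<longrightarrow>
        pdom (pa b I - pa a I) (smult (\<theta>^p') (pm a I)) \<longrightarrow>
        (\<exists>\<sigma>. \<sigma> permutes I \<and> (\<forall>j\<in>I. cmod (b (\<sigma> j) - a j) \<le> K' * \<theta> * cmod (a j)))"
    and K': "0 \<le> K'"
    and fin: "finite I" and card: "card I = Suc m"
    and th0: "0 \<le> \<theta>" and th1: "\<theta> \<le> \<theta>0'" and th2: "\<theta> \<le> 1 / (3 * 2^(2*m+3))"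
    and hyp: "pdom (pa b I - pa a I) (smult (\<theta>^(Suc m * (p'+1))) (pm a I))"
  shows "\<exists>\<sigma>. \<sigma> permutes I \<and> (\<forall>j\<in>I. cmod (b (\<sigma> j) - a j) \<le> max K' 2 * \<theta> * cmod (a j))"
proof -
  define n where "n = Suc m"
  define q where "q = p' + 1"
  define p where "p = n * q"
  have hyp': "pdom (pa b I - pa a I) (smult (\<theta>^p) (pm a I))" using hyp by (simp add: p_def n_def q_def)
  have Ine: "I \<noteq> {}" using card by auto
  have th3: "\<theta> * (3 * 2^(2*m+3)) \<le> 1" using th2 by (simp add: pos_le_divide_eq)
  have "(2::real)^3 \<le> 2^(2*m+3)" by (rule power_increasing) auto
  then have "\<theta> * 24 \<le> \<theta> * (3 * 2^(2*m+3))" using th0 by (intro mult_left_mono) auto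
  then have thl: "\<theta> \<le> 1/24" using th3 by simp
  have pow_le: "\<theta>^k \<le> \<theta>" if "1 \<le> k" for k
    using power_decreasing[OF that th0, of] thl by simp
  have p1: "1 \<le> p" "1 \<le> q" by (simp_all add: p_def n_def q_def)
  obtain j0 where j0: "j0 \<in> I" "\<And>i. i \<in> I \<Longrightarrow> cmod (a i) \<le> cmod (a j0)"
    using finite_argmax[OF fin Ine, of "\<lambda>i. cmod (a i)"] by blast
  define A where "A = cmod (a j0)"
  have cardn: "card I = n" using card n_def by simp
  show ?thesis
  proof (cases "A = 0")
    case True
    then have az: "a i = 0" if "i \<in> I" for i using j0(2)[OF that] A_def by simp
    have bz: "b j = 0" if jI: "j \<in> I" for j
    proof -
      have "poly (pa b I) (b j) = 0" unfolding pa_poly using fin jI by (auto intro: prod_zero)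
      moreover have "poly (pa a I) z = z ^ n" for z
        unfolding pa_poly using az cardn by simp
      moreover have "poly (pm a I) r = r ^ n" for r
        unfolding pm_poly using az cardn by simp
      moreover have "cmod (poly (pa b I - pa a I) (b j)) \<le> poly (smult (\<theta>^p) (pm a I)) (cmod (b j))"
        by (rule pdom_poly[OF hyp'])
      ultimately have "cmod (b j) ^ n \<le> \<theta>^p * cmod (b j) ^ n" by (simp add: norm_power)
      moreover have "\<theta>^p < 1" using pow_le[OF p1(1)] thl by simp
      ultimately have "(1 - \<theta>^p) * cmod (b j) ^ n \<le> (1 - \<theta>^p) * 0"
        by (simp add: algebra_simps)
      then have "cmod (b j) ^ n \<le> 0" using \<open>\<theta>^p < 1\<close>
        using mult_le_cancel_left_pos[of "1 - \<theta>^p" "cmod (b j) ^ n" 0] by simp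
      then have "cmod (b j) ^ n = 0" using zero_le_power[OF norm_ge_zero, of "b j" n] by linarith
      then show ?thesis by simp
    qed
    show ?thesis
      by (rule exI[of _ id]) (auto simp: permutes_id az bz)
  next
    case False
    then have A0: "A > 0" by (simp add: A_def)
    have aA: "cmod (a i) \<le> A" if "i \<in> I" for i using j0(2)[OF that] A_def by simp
    have "poly (pa a I) (a j0) = 0" unfolding pa_poly using fin j0 by (auto intro: prod_zero)
    then have "cmod (poly (pa b I) (a j0)) \<le> poly (smult (\<theta>^p) (pm a I)) A"
      using pdom_poly[OF hyp', of "a j0"] by (simp add: A_def)
    also have "\<dots> = \<theta>^p * (\<Prod>i\<in>I. A + cmod (a i))" by (simp add: pm_poly)
    also have "\<dots> \<le> \<theta>^p * (\<Prod>i\<in>I. 2 * A)"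
      using aA th0 A0 by (intro mult_left_mono prod_mono) auto
    also have "\<dots> = (2 * \<theta>^q * A) ^ n"
    proof -
      have 1: "(\<Prod>i\<in>I. 2 * A) = (2 * A) ^ n" using cardn by simp
      have 2: "\<theta>^p = (\<theta>^q)^n" unfolding p_def by (simp add: mult.commute[of n q] power_mult)
      have 3: "(\<theta>^q)^n * (2 * A) ^ n = (\<theta>^q * (2 * A)) ^ n" by (rule power_mult_distrib[symmetric])
      show ?thesis unfolding 1 2 3 by (simp add: ac_simps)
    qed
    finally have prodb: "(\<Prod>i\<in>I. cmod (a j0 - b i)) \<le> (2 * \<theta>^q * A) ^ n"
      by (simp add: pa_poly prod_norm)
    obtain l where l: "l \<in> I" "\<And>i. i \<in> I \<Longrightarrow> cmod (a j0 - b l) \<le> cmod (a j0 - b i)"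
      using finite_argmin[OF fin Ine, of "\<lambda>i. cmod (a j0 - b i)"] by blast
    have "cmod (a j0 - b l) ^ n = (\<Prod>i\<in>I. cmod (a j0 - b l))" using cardn by simp
    also have "\<dots> \<le> (\<Prod>i\<in>I. cmod (a j0 - b i))" using l by (intro prod_mono) auto
    finally have "cmod (a j0 - b l) ^ n \<le> (2 * \<theta>^q * A) ^ n" using prodb by linarith
    then have "cmod (a j0 - b l) ^ Suc m \<le> (2 * \<theta>^q * A) ^ Suc m" by (simp only: n_def)
    then have close: "cmod (a j0 - b l) \<le> 2 * \<theta>^q * A"
      by (rule power_le_imp_le_base) (use th0 A0 in simp)
    define \<tau> where "\<tau> = Transposition.transpose l j0"
    have tau: "\<tau> permutes I" unfolding \<tau>_def using l j0 by (intro permutes_swap_id)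
    define b' where "b' = b \<circ> \<tau>"
    have pab': "pa b' I = pa b I" unfolding b'_def by (rule pa_permute[OF tau])
    define I' where "I' = I - {j0}"
    have finI': "finite I'" using fin by (simp add: I'_def)
    have cardI': "card I' = m" using cardn j0 fin by (simp add: I'_def n_def)
    define \<beta> where "\<beta> = b' j0"
    have beta: "\<beta> = b l" by (simp add: \<beta>_def b'_def \<tau>_def)
    define \<alpha> where "\<alpha> = a j0"
    define G where "G = pm a I'"
    define R where "R = pa b' I' - pa a I'"
    define S where "S = (pa b' I - pa a I) - [:\<alpha> - \<beta>:] * pa a I'"
    have Q: "pa b' I = [:-\<beta>, 1:] * pa b' I'" unfolding \<beta>_def I'_def by (rule pa_remove[OF fin j0(1)])
    have P: "pa a I = [:-\<alpha>, 1:] * pa a I'" unfolding \<alpha>_def I'_def by (rule pa_remove[OF fin j0(1)])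
    have PM: "pm a I = [:A, 1:] * G" unfolding G_def A_def I'_def by (rule pm_remove[OF fin j0(1)])
    have RS: "[:-\<beta>, 1:] * R = S"
    proof -
      have e: "[:-\<beta>, 1:] = [:-\<alpha>, 1:] + [:\<alpha> - \<beta>:]" by simp
      have "[:-\<beta>, 1:] * R = [:-\<beta>, 1:] * pa b' I' - [:-\<beta>, 1:] * pa a I'"
        unfolding R_def by (rule right_diff_distrib)
      also have "[:-\<beta>, 1:] * pa a I' = [:-\<alpha>, 1:] * pa a I' + [:\<alpha> - \<beta>:] * pa a I'"
        by (subst e) (rule distrib_right)
      finally show ?thesis unfolding S_def Q P by (simp only: diff_diff_eq)
    qed
    have nnG: "nneg G" unfolding G_def using finI' by (rule nneg_pm)
    define c where "c = \<theta>^p + 2 * \<theta>^q"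
    have c0: "0 \<le> c" using th0 by (simp add: c_def)
    have Sd: "pdom S (smult c ([:A, 1:] * G))"
    proof -
      have d1: "pdom (pa b' I - pa a I) (smult (\<theta>^p) ([:A, 1:] * G))"
        using hyp' by (simp add: pab' PM)
      have d2: "pdom ([:\<alpha> - \<beta>:] * pa a I') ([:cmod (\<alpha> - \<beta>):] * G)"
        unfolding G_def by (intro pdom_mult pdom_const pdom_pa finI')
      have "pdom S (smult (\<theta>^p) ([:A, 1:] * G) + [:cmod (\<alpha> - \<beta>):] * G)"
        unfolding S_def by (rule pdom_diff[OF d1 d2])
      moreover have "cle (smult (\<theta>^p) ([:A, 1:] * G) + [:cmod (\<alpha> - \<beta>):] * G) (smult c ([:A, 1:] * G))"
        unfolding cle_def
      proof
        fix k
        have ab: "cmod (\<alpha> - \<beta>) \<le> 2 * \<theta>^q * A" using close beta by (simp add: \<alpha>_def)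
        have Gk: "0 \<le> coeff G k" "0 \<le> (case k of 0 \<Rightarrow> 0 | Suc j \<Rightarrow> coeff G j)"
          using nnG by (auto simp: nneg_def split: nat.split)
        have "cmod (\<alpha> - \<beta>) * coeff G k \<le> 2 * \<theta>^q * A * coeff G k"
          using ab Gk by (intro mult_right_mono) auto
        also have "\<dots> \<le> 2 * \<theta>^q * (A * coeff G k + (case k of 0 \<Rightarrow> 0 | Suc j \<Rightarrow> coeff G j))"
          using Gk th0 by (simp add: algebra_simps)
        finally show "coeff (smult (\<theta>^p) ([:A, 1:] * G) + [:cmod (\<alpha> - \<beta>):] * G) k
             \<le> coeff (smult c ([:A, 1:] * G)) k"
          unfolding c_def coeff_add coeff_smult coeff_lin_mult by (simp add: algebra_simps)
      qed
      ultimately show ?thesis by (rule pdom_cle)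
    qed
    have betaA: "A / 2 \<le> cmod \<beta>"
    proof -
      have "cmod \<alpha> \<le> cmod \<beta> + cmod (\<alpha> - \<beta>)" by (metis norm_triangle_sub add.commute)
      moreover have "cmod (\<alpha> - \<beta>) \<le> 2 * \<theta>^q * A" using close beta by (simp add: \<alpha>_def)
      moreover have "2 * \<theta>^q * A \<le> A / 2" using pow_le[OF p1(2)] thl A0 by simp
      ultimately show ?thesis by (simp add: \<alpha>_def A_def)
    qed
    have Gb: "\<forall>i k. i \<le> k \<longrightarrow> k \<le> m \<longrightarrow> coeff G i \<le> 2^m * A^(k-i) * coeff G k"
      using coeff_G_bound[OF finI', of "\<lambda>i. cmod (a i)" A] aA cardI'
      unfolding G_def pm_def I'_def by auto
    have degR: "degree R \<le> m" unfolding R_def using degree_pa[OF finI'] cardI'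
      by (metis degree_diff_le)
    have Rd: "pdom R (smult (c * 2^(2*m+3)) G)"
      by (rule div_bound[OF RS Sd A0 betaA Gb degR nnG c0])
    have "c * 2^(2*m+3) \<le> \<theta>^p'"
    proof -
      have "\<theta>^p \<le> \<theta>^q" using th0 thl by (intro power_decreasing) (auto simp: p_def n_def)
      then have "c \<le> 3 * \<theta>^q" by (simp add: c_def)
      then have "c * 2^(2*m+3) \<le> 3 * \<theta>^q * 2^(2*m+3)" by (intro mult_right_mono) auto
      also have "\<dots> = (\<theta> * (3 * 2^(2*m+3))) * \<theta>^p'" by (simp add: q_def)
      also have "\<dots> \<le> 1 * \<theta>^p'" using th3 th0 by (intro mult_right_mono) auto
      finally show ?thesis by simp
    qed
    then have Rd': "pdom (pa b' I' - pa a I') (smult (\<theta>^p') (pm a I'))"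
      using pdom_cle[OF Rd cle_smult2[OF nnG]] unfolding R_def G_def by blast
    from IH[rule_format, OF finI' cardI' th0 th1 Rd']
    obtain \<sigma>' where s': "\<sigma>' permutes I'" "\<And>j. j \<in> I' \<Longrightarrow> cmod (b' (\<sigma>' j) - a j) \<le> K' * \<theta> * cmod (a j)"
      by blast
    define \<sigma> where "\<sigma> = \<tau> \<circ> \<sigma>'"
    have s'I: "\<sigma>' permutes I" using s'(1) by (rule permutes_subset) (auto simp: I'_def)
    have sI: "\<sigma> permutes I" unfolding \<sigma>_def by (rule permutes_compose[OF s'I tau])
    have "cmod (b (\<sigma> j) - a j) \<le> max K' 2 * \<theta> * cmod (a j)" if jI: "j \<in> I" for j
    proof (cases "j = j0")
      case True
      have "\<sigma>' j0 = j0" using s'(1) by (rule permutes_not_in) (simp add: I'_def)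
      then have "\<sigma> j0 = l" by (simp add: \<sigma>_def \<tau>_def)
      then have "cmod (b (\<sigma> j) - a j) \<le> 2 * \<theta>^q * A" using close True by (simp add: norm_minus_commute)
      also have "\<dots> \<le> 2 * \<theta> * A" using pow_le[OF p1(2)] A0 by simp
      also have "\<dots> \<le> max K' 2 * \<theta> * A" using th0 A0 by (intro mult_right_mono) auto
      finally show ?thesis using True by (simp add: A_def)
    next
      case False
      then have jI': "j \<in> I'" using jI by (simp add: I'_def)
      have "b (\<sigma> j) = b' (\<sigma>' j)" by (simp add: \<sigma>_def b'_def)
      then have "cmod (b (\<sigma> j) - a j) \<le> K' * \<theta> * cmod (a j)" using s'(2)[OF jI'] by simp
      also have "\<dots> \<le> max K' 2 * \<theta> * cmod (a j)" using th0 by (intro mult_right_mono) auto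
      finally show ?thesis .
    qed
    then show ?thesis using sI by blast
  qed
qed


lemma match_roots:
  "\<exists>p K \<theta>0. 0 < \<theta>0 \<and> 0 \<le> K \<and> (\<forall>(I::'a set) a b \<theta>. finite I \<longrightarrow> card I = m \<longrightarrow> 0 \<le> \<theta> \<longrightarrow> \<theta> \<le> \<theta>0 \<longrightarrow>
        pdom (pa b I - pa a I) (smult (\<theta>^p) (pm a I)) \<longrightarrow>
        (\<exists>\<sigma>. \<sigma> permutes I \<and> (\<forall>j\<in>I. cmod (b (\<sigma> j) - a j) \<le> K * \<theta> * cmod (a j))))"
proof (induction m)
  case 0
  have "\<forall>(I::'a set) (a::'a\<Rightarrow>complex) b (\<theta>::real). finite I \<longrightarrow> card I = 0 \<longrightarrow> 0 \<le> \<theta> \<longrightarrow> \<theta> \<le> 1 \<longrightarrow>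
        pdom (pa b I - pa a I) (smult (\<theta>^0) (pm a I)) \<longrightarrow>
        (\<exists>\<sigma>. \<sigma> permutes I \<and> (\<forall>j\<in>I. cmod (b (\<sigma> j) - a j) \<le> 0 * \<theta> * cmod (a j)))"
    by (auto intro!: exI[of _ id] permutes_id)
  then show ?case by (intro exI[of _ "0::nat"] exI[of _ "0::real"] exI[of _ "1::real"]) auto
next
  case (Suc m)
  then obtain p' K' \<theta>0' where h: "0 < \<theta>0'" "0 \<le> K'"
    "\<forall>(I::'a set) a b \<theta>. finite I \<longrightarrow> card I = m \<longrightarrow> 0 \<le> \<theta> \<longrightarrow> \<theta> \<le> \<theta>0' \<longrightarrow>
        pdom (pa b I - pa a I) (smult (\<theta>^p') (pm a I)) \<longrightarrow>
        (\<exists>\<sigma>. \<sigma> permutes I \<and> (\<forall>j\<in>I. cmod (b (\<sigma> j) - a j) \<le> K' * \<theta> * cmod (a j)))"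
    by blast
  have main: "\<forall>(I::'a set) a b \<theta>. finite I \<longrightarrow> card I = Suc m \<longrightarrow> 0 \<le> \<theta> \<longrightarrow> \<theta> \<le> min \<theta>0' (1 / (3 * 2^(2*m+3))) \<longrightarrow>
        pdom (pa b I - pa a I) (smult (\<theta>^(Suc m * (p' + 1))) (pm a I)) \<longrightarrow>
        (\<exists>\<sigma>. \<sigma> permutes I \<and> (\<forall>j\<in>I. cmod (b (\<sigma> j) - a j) \<le> max K' 2 * \<theta> * cmod (a j)))"
  proof (intro allI impI)
    fix I :: "'a set" and a b :: "'a \<Rightarrow> complex" and \<theta> :: real
    assume a: "finite I" "card I = Suc m" "0 \<le> \<theta>" "\<theta> \<le> min \<theta>0' (1 / (3 * 2 ^ (2 * m + 3)))"
      "pdom (pa b I - pa a I) (smult (\<theta> ^ (Suc m * (p' + 1))) (pm a I))"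
    show "\<exists>\<sigma>. \<sigma> permutes I \<and> (\<forall>j\<in>I. cmod (b (\<sigma> j) - a j) \<le> max K' 2 * \<theta> * cmod (a j))"
      by (rule match_step[OF h(3) h(2) a(1) a(2) a(3) _ _ a(5)]) (use a(4) in auto)
  qed
  have "0 < min \<theta>0' (1 / (3 * 2 ^ (2 * m + 3)))" using h(1) by simp
  moreover have "0 \<le> max K' 2" by simp
  ultimately show ?case using main by blast
qed



definition fac :: "complex^'n^'n \<Rightarrow> ('n \<Rightarrow> 'n) \<Rightarrow> 'n \<Rightarrow> complex poly" where
  "fac A p i = (if p i = i then [:- A$i$i, 1:] else [:- A$i$(p i):])"

definition charp :: "complex^'n::finite^'n \<Rightarrow> complex poly" where
  "charp A = (\<Sum>p\<in>{p. p permutes (UNIV::'n set)}. smult (of_int (sign p)) (\<Prod>i\<in>UNIV. fac A p i))"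

lemma poly_charp: "poly (charp A) x = det (mat x - A)"
  unfolding charp_def det_def poly_sum poly_smult poly_prod
  by (intro sum.cong refl arg_cong2[where f="(*)"] prod.cong) (auto simp: fac_def mat_def)

lemma degree_fac_le: "degree (\<Prod>i\<in>UNIV. fac A p i) \<le> (\<Sum>i\<in>UNIV. if p i = i then 1 else 0)"
proof -
  have "degree (\<Prod>i\<in>UNIV. fac A p i) \<le> (\<Sum>i\<in>UNIV. degree (fac A p i))"
    using degree_prod_sum_le[of UNIV "fac A p"] by (simp add: comp_def)
  also have "\<dots> = (\<Sum>i\<in>UNIV. if p i = i then 1 else 0)"
    by (intro sum.cong) (auto simp: fac_def)
  finally show ?thesis .
qed

lemma degree_fac_nonid: "p \<noteq> id \<Longrightarrow> degree (\<Prod>i\<in>UNIV. fac A (p::'n::finite\<Rightarrow>'n) i) < CARD('n)"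
proof -
  assume "p \<noteq> id"
  then obtain i0 where "p i0 \<noteq> i0" by (metis eq_id_iff)
  then have "(\<Sum>i\<in>UNIV. if p i = i then 1 else 0) < (\<Sum>i\<in>(UNIV::'n set). (1::nat))"
    by (intro sum_strict_mono_ex1) auto
  then show ?thesis using degree_fac_le[of A p] by simp
qed

lemma fac_id: "(\<Prod>i\<in>UNIV. fac A id i) = pa (\<lambda>i. A$i$i) UNIV"
  by (simp add: fac_def pa_def)

lemma pa_monic: "finite I \<Longrightarrow> degree (pa a I) = card I \<and> lead_coeff (pa a I) = 1"
proof -
  assume f: "finite I"
  have d: "degree (pa a I) = card I" unfolding pa_def by (simp add: degree_prod_eq_sum_degree)
  have "lead_coeff (pa a I) = 1" unfolding pa_def lead_coeff_prod by simp
  with d show ?thesis by simp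
qed

lemma charp_split: "charp (A::complex^'n::finite^'n) = pa (\<lambda>i. A$i$i) UNIV +
   (\<Sum>p\<in>{p. p permutes (UNIV::'n set)} - {id}. smult (of_int (sign p)) (\<Prod>i\<in>UNIV. fac A p i))"
proof -
  have "id \<in> {p. p permutes (UNIV::'n set)}" by (simp add: permutes_id)
  then show ?thesis unfolding charp_def
    by (subst sum.remove[of _ id]) (auto simp: fac_id)
qed

lemma charp_monic: "degree (charp (A::complex^'n::finite^'n)) = CARD('n) \<and> lead_coeff (charp A) = 1"
proof -
  define Rst where "Rst = (\<Sum>p\<in>{p. p permutes (UNIV::'n set)} - {id}. smult (of_int (sign p)) (\<Prod>i\<in>UNIV. fac A p i))"
  have cR: "coeff Rst k = 0" if "k \<ge> CARD('n)" for k
    unfolding Rst_def coeff_sum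
  proof (rule sum.neutral, intro ballI)
    fix p assume "p \<in> {p. p permutes (UNIV::'n set)} - {id}"
    then have "p \<noteq> id" by simp
    then have "degree (\<Prod>i\<in>UNIV. fac A p i) < k" using degree_fac_nonid[of p A] that by simp
    then show "coeff (smult (of_int (sign p)) (\<Prod>i\<in>UNIV. fac A p i)) k = 0" by (simp add: coeff_eq_0)
  qed
  have m: "degree (pa (\<lambda>i. A$i$i) UNIV) = CARD('n)" "lead_coeff (pa (\<lambda>i. A$i$i) UNIV) = 1"
    using pa_monic[OF finite_class.finite_UNIV, of "\<lambda>i. A$i$i"] by auto
  have ch: "charp A = pa (\<lambda>i. A$i$i) UNIV + Rst" unfolding Rst_def by (rule charp_split)
  have c1: "coeff (charp A) (CARD('n)) = 1" using m cR by (simp add: ch)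
  have c0: "coeff (charp A) k = 0" if "k > CARD('n)" for k
    using m cR that by (simp add: ch coeff_eq_0)
  have "degree (charp A) = CARD('n)"
    using c1 c0 by (metis degree_le le_degree le_antisym leI zero_neq_one)
  then show ?thesis using c1 by simp
qed

lemma charp_roots: "\<exists>b. charp (A::complex^'n::finite^'n) = pa b (UNIV::'n set)"
proof -
  obtain root where r: "smult (lead_coeff (charp A)) (\<Prod>i<degree (charp A). [:-root i, 1:]) = charp A"
    using complex_poly_decompose' by blast
  obtain h where h: "bij_betw h (UNIV::'n set) {0..<CARD('n)}"
    using ex_bij_betw_finite_nat[of "UNIV::'n set"] by auto
  have d: "degree (charp A) = CARD('n)" and l: "coeff (charp A) CARD('n) = 1" using charp_monic[of A] by auto
  from r have "smult 1 (\<Prod>i<CARD('n). [:-root i, 1:]) = charp A" by (simp only: d l)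
  then have "charp A = (\<Prod>i<CARD('n). [:-root i, 1:])" by simp
  also have "\<dots> = (\<Prod>j\<in>UNIV. [:-root (h j), 1:])"
    using prod.reindex_bij_betw[OF h, of "\<lambda>i. [:-root i, 1:]"] by (simp add: atLeast0LessThan)
  finally have "charp A = (\<Prod>j\<in>UNIV. [:-(root \<circ> h) j, 1:])" by simp
  then have "charp A = pa (root \<circ> h) UNIV" by (simp only: pa_def)
  then show ?thesis by blast
qed



lemma diag_entry: "(diag_mat d ** B ** diag_mat d) $ i $ j = d i * B$i$j * d j"
proof -
  have 1: "(diag_mat d ** B) $ i $ k = d i * B$i$k" for k
  proof -
    have "(diag_mat d ** B) $ i $ k = (\<Sum>l\<in>UNIV. (if i = l then d l else 0) * B$l$k)"
      by (simp add: matrix_matrix_mult_def diag_mat_def)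
    also have "\<dots> = (\<Sum>l\<in>UNIV. if l = i then d l * B$l$k else 0)"
      by (intro sum.cong) auto
    also have "\<dots> = d i * B$i$k" by (simp add: sum.delta)
    finally show ?thesis .
  qed
  have m: "(X ** diag_mat d)$i$j = (\<Sum>l\<in>UNIV. X$i$l * (diag_mat d)$l$j)" for X :: "complex^'a^'a"
    by (simp add: matrix_matrix_mult_def)
  have dd: "(diag_mat d)$l$j = (if l = j then d j else 0)" for l by (simp add: diag_mat_def)
  have "(diag_mat d ** B ** diag_mat d) $ i $ j = (\<Sum>l\<in>UNIV. (diag_mat d ** B)$i$l * (if l = j then d j else 0))"
    unfolding m dd ..
  also have "\<dots> = (\<Sum>l\<in>UNIV. if l = j then (diag_mat d ** B)$i$l * d j else 0)"
    by (intro sum.cong) auto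
  also have "\<dots> = d i * B$i$j * d j" by (simp add: sum.delta 1)
  finally show ?thesis .
qed

lemma pdom_prod_diff:
  assumes "finite I" "\<And>i. i \<in> I \<Longrightarrow> pdom (u i) (U i)" "\<And>i. i \<in> I \<Longrightarrow> pdom (v i) (V i)"
  shows "pdom ((\<Prod>i\<in>I. u i + v i) - (\<Prod>i\<in>I. u i)) ((\<Prod>i\<in>I. U i + V i) - (\<Prod>i\<in>I. U i))"
  using assms
proof (induction I rule: finite_induct)
  case empty
  then show ?case by (simp add: pdom_zero)
next
  case (insert x I)
  let ?X = "\<Prod>i\<in>I. u i + v i" and ?Y = "\<Prod>i\<in>I. u i"
  let ?X' = "\<Prod>i\<in>I. U i + V i" and ?Y' = "\<Prod>i\<in>I. U i"
  have e1: "(u x + v x) * ?X - u x * ?Y = (u x + v x) * (?X - ?Y) + v x * ?Y"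
    by (simp add: algebra_simps)
  have e2: "(U x + V x) * ?X' - U x * ?Y' = (U x + V x) * (?X' - ?Y') + V x * ?Y'"
    by (simp add: algebra_simps)
  have "pdom ((u x + v x) * (?X - ?Y) + v x * ?Y) ((U x + V x) * (?X' - ?Y') + V x * ?Y')"
    using insert by (intro pdom_add pdom_mult pdom_prod) auto
  moreover have "(\<Prod>i\<in>insert x I. u i + v i) = (u x + v x) * ?X" "prod u (insert x I) = u x * ?Y"
    "(\<Prod>i\<in>insert x I. U i + V i) = (U x + V x) * ?X'" "prod U (insert x I) = U x * ?Y'"
    using insert.hyps by simp_all
  ultimately show ?case by (simp only: e1 e2)
qed

lemma one_plus_pow': "0 \<le> (e::real) \<Longrightarrow> e \<le> 1 \<Longrightarrow> (1 + e) ^ n - 1 \<le> (2 ^ n - 1) * e"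
proof (induction n)
  case 0 then show ?case by simp
next
  case (Suc n)
  have "(1 + e) ^ Suc n - 1 = (1 + e) * ((1 + e) ^ n - 1) + e" by (simp add: algebra_simps)
  also have "\<dots> \<le> (1 + e) * ((2 ^ n - 1) * e) + e"
    using Suc by (intro add_mono mult_left_mono) auto
  also have "\<dots> \<le> 2 * ((2 ^ n - 1) * e) + e"
    using Suc.prems by (intro add_mono mult_right_mono) auto
  also have "\<dots> = (2 ^ Suc n - 1) * e" by (simp add: algebra_simps)
  finally show ?case .
qed

lemma charp_bound:
  fixes \<nu> :: "'n::finite \<Rightarrow> complex" and B :: "complex^'n^'n"
  assumes Bb: "\<And>i j. cmod (B$i$j) \<le> \<epsilon>" and e0: "0 \<le> \<epsilon>" and e1: "\<epsilon> \<le> 1"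
  shows "pdom (charp (diag_mat \<nu> ** (mat 1 + B) ** diag_mat \<nu>) - pa (\<lambda>i. \<nu> i ^ 2) UNIV)
            (smult ((1 + fact CARD('n)) * 2^CARD('n) * \<epsilon>) (pm (\<lambda>i. \<nu> i ^ 2) UNIV))"
proof -
  define A where "A = diag_mat \<nu> ** (mat 1 + B) ** diag_mat \<nu>"
  define a where "a = (\<lambda>i. \<nu> i ^ 2)"
  define U where "U = (\<lambda>i. [:cmod (a i), 1:])"
  define n where "n = CARD('n)"
  have Aij: "A$i$j = \<nu> i * ((if i = j then 1 else 0) + B$i$j) * \<nu> j" for i j
    by (simp add: A_def diag_entry mat_def)
  have Aii: "A$i$i = a i + a i * B$i$i" for i by (simp add: Aij a_def power2_eq_square algebra_simps)
  have nnU: "nneg (U i)" for i by (auto simp: U_def nneg_def coeff_pCons split: nat.split)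
  have pmU: "pm a UNIV = (\<Prod>i\<in>UNIV. U i)" by (simp add: pm_def U_def)
  have ca: "cmod (a i) = cmod (\<nu> i) ^ 2" for i by (simp add: a_def norm_power)
  have nnP: "nneg (\<Prod>i\<in>UNIV. U i)" using nnU by (intro nneg_prod) auto
  have idp: "pdom (pa (\<lambda>i. A$i$i) UNIV - pa a UNIV) (smult ((1+\<epsilon>)^n - 1) (\<Prod>i\<in>UNIV. U i))"
  proof -
    have "pdom ((\<Prod>i\<in>UNIV. [:-a i, 1:] + [:-(a i * B$i$i):]) - (\<Prod>i\<in>UNIV. [:-a i, 1:]))
             ((\<Prod>i\<in>UNIV. U i + smult \<epsilon> (U i)) - (\<Prod>i\<in>UNIV. U i))"
    proof (rule pdom_prod_diff)
      show "pdom [:-a i, 1:] (U i)" for i using pdom_lin[of "-a i"] by (simp add: U_def)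
      show "pdom [:-(a i * B$i$i):] (smult \<epsilon> (U i))" for i
      proof -
        have "cle [:cmod (-(a i * B$i$i)):] (smult \<epsilon> (U i))"
          unfolding cle_def U_def
        proof
          fix k show "coeff [:cmod (-(a i * B$i$i)):] k \<le> coeff (smult \<epsilon> [:cmod (a i), 1:]) k"
          proof (cases k)
            case 0
            have "cmod (a i) * cmod (B$i$i) \<le> cmod (a i) * \<epsilon>" using Bb by (intro mult_left_mono) auto
            then show ?thesis using 0 by (simp add: norm_mult mult.commute)
          next
            case (Suc k') then show ?thesis using e0 by (cases k') auto
          qed
        qed
        then show ?thesis using pdom_const pdom_cle by blast
      qed
    qed simp
    moreover have "(\<Prod>i\<in>UNIV. [:-a i, 1:] + [:-(a i * B$i$i):]) = pa (\<lambda>i. A$i$i) UNIV"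
      by (simp add: pa_def Aii)
    moreover have "(\<Prod>i\<in>UNIV. [:-a i, 1:]) = pa a UNIV" by (simp add: pa_def)
    moreover have "(\<Prod>i\<in>UNIV. U i + smult \<epsilon> (U i)) - (\<Prod>i\<in>UNIV. U i) = smult ((1+\<epsilon>)^n - 1) (\<Prod>i\<in>UNIV. U i)"
    proof -
      have "(\<Prod>i\<in>UNIV. U i + smult \<epsilon> (U i)) = (\<Prod>i\<in>UNIV. smult (1+\<epsilon>) (U i))"
        by (simp add: smult_add_left)
      also have "\<dots> = smult ((1+\<epsilon>)^n) (\<Prod>i\<in>UNIV. U i)" by (simp add: prod_smult n_def)
      finally show ?thesis by (simp add: smult_diff_left)
    qed
    ultimately show ?thesis by simp
  qed
  have nonid: "pdom (smult (of_int (sign p)) (\<Prod>i\<in>UNIV. fac A p i)) (smult (\<epsilon> * 2^n) (\<Prod>i\<in>UNIV. U i))"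
    if p: "p permutes UNIV" "p \<noteq> id" for p
  proof -
    define w where "w = (\<lambda>i. if p i = i then 1 else cmod (\<nu> i))"
    define H where "H = (\<lambda>i. if p i = i then smult (1+\<epsilon>) (U i) else [:\<epsilon>:])"
    have pd: "pdom (fac A p i) (smult (w i * w (p i)) (H i))" for i
    proof (cases "p i = i")
      case True
      have "cle [:cmod (- A$i$i), 1:] (smult (1+\<epsilon>) (U i))"
        unfolding cle_def U_def
      proof
        fix k show "coeff [:cmod (- A$i$i), 1:] k \<le> coeff (smult (1+\<epsilon>) [:cmod (a i), 1:]) k"
        proof (cases k)
          case 0
          have "cmod (A$i$i) \<le> cmod (a i) + cmod (a i) * cmod (B$i$i)" unfolding Aii
            by (metis norm_mult norm_triangle_ineq)
          also have "\<dots> \<le> cmod (a i) + cmod (a i) * \<epsilon>" using Bb by (intro add_left_mono mult_left_mono) auto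
          finally show ?thesis using 0 by (simp add: algebra_simps)
        next
          case (Suc k') then show ?thesis using e0 by (cases k') auto
        qed
      qed
      then show ?thesis using True pdom_lin[of "- A$i$i"] by (auto simp: fac_def w_def H_def intro: pdom_cle)
    next
      case False
      have "p (p i) \<noteq> p i" using False permutes_inj[OF p(1)] by (metis injD)
      then have ww: "w i * w (p i) = cmod (\<nu> i) * cmod (\<nu> (p i))" using False by (simp add: w_def)
      have "cle [:cmod (- A$i$(p i)):] (smult (cmod (\<nu> i) * cmod (\<nu> (p i))) [:\<epsilon>:])"
        unfolding cle_def
      proof
        fix k show "coeff [:cmod (- A$i$(p i)):] k \<le> coeff (smult (cmod (\<nu> i) * cmod (\<nu> (p i))) [:\<epsilon>:]) k"
        proof (cases k)
          case 0
          have ne: "i \<noteq> p i" using False by auto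
          have "cmod (A$i$(p i)) = cmod (\<nu> i) * cmod (B$i$(p i)) * cmod (\<nu> (p i))"
            using ne by (simp add: Aij norm_mult)
          also have "\<dots> \<le> cmod (\<nu> i) * \<epsilon> * cmod (\<nu> (p i))"
            using Bb by (intro mult_right_mono mult_left_mono) auto
          finally show ?thesis using 0 by (simp add: algebra_simps)
        next
          case (Suc k') then show ?thesis by simp
        qed
      qed
      then show ?thesis using False ww pdom_const[of "- A$i$(p i)"] by (auto simp: fac_def H_def intro: pdom_cle)
    qed
    have "pdom (\<Prod>i\<in>UNIV. fac A p i) (\<Prod>i\<in>UNIV. smult (w i * w (p i)) (H i))"
      by (intro pdom_prod pd) simp
    moreover have "(\<Prod>i\<in>UNIV. smult (w i * w (p i)) (H i)) = (\<Prod>i\<in>UNIV. smult (w i ^ 2) (H i))"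
    proof -
      have "(\<Prod>i\<in>UNIV. smult (w i * w (p i)) (H i)) = smult ((\<Prod>i\<in>UNIV. w i) * (\<Prod>i\<in>UNIV. w (p i))) (\<Prod>i\<in>UNIV. H i)"
        by (simp add: prod_smult prod.distrib)
      also have "(\<Prod>i\<in>UNIV. w (p i)) = (\<Prod>i\<in>UNIV. w i)" using prod.permute[OF p(1), of w] by (simp add: comp_def)
      finally show ?thesis by (simp add: prod_smult power2_eq_square prod.distrib)
    qed
    moreover have "cle (\<Prod>i\<in>UNIV. smult (w i ^ 2) (H i)) (\<Prod>i\<in>UNIV. smult (if p i = i then 1 + \<epsilon> else \<epsilon>) (U i))"
    proof (rule cle_prod)
      show "nneg (smult (w i ^ 2) (H i))" for i using nnU e0
        by (auto simp: nneg_def H_def coeff_pCons split: nat.split)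
      show "cle (smult (w i ^ 2) (H i)) (smult (if p i = i then 1 + \<epsilon> else \<epsilon>) (U i))" for i
      proof (cases "p i = i")
        case True then show ?thesis by (simp add: w_def H_def cle_refl)
      next
        case False
        show ?thesis unfolding cle_def
        proof
          fix k
          show "coeff (smult (w i ^ 2) (H i)) k \<le> coeff (smult (if p i = i then 1 + \<epsilon> else \<epsilon>) (U i)) k"
            using False e0 by (cases k) (auto simp: w_def H_def U_def ca coeff_pCons mult.commute split: nat.split)
        qed
      qed
    qed simp
    moreover have "(\<Prod>i\<in>UNIV. smult (if p i = i then 1 + \<epsilon> else \<epsilon>) (U i)) =
        smult (\<Prod>i\<in>UNIV. if p i = i then 1 + \<epsilon> else \<epsilon>) (\<Prod>i\<in>UNIV. U i)"
      by (simp add: prod_smult)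
    moreover have "(\<Prod>i\<in>UNIV. if p i = i then 1 + \<epsilon> else \<epsilon>) \<le> \<epsilon> * 2^n"
    proof -
      obtain i0 where i0: "p i0 \<noteq> i0" using p(2) by (metis eq_id_iff)
      let ?k = "\<lambda>i. if p i = i then 1 + \<epsilon> else \<epsilon>"
      have "(\<Prod>i\<in>UNIV. ?k i) = ?k i0 * (\<Prod>i\<in>UNIV - {i0}. ?k i)" by (simp add: prod.remove)
      also have "\<dots> \<le> \<epsilon> * (\<Prod>i\<in>UNIV - {i0}. 2)"
        using i0 e0 e1 by (intro mult_mono prod_mono prod_nonneg) auto
      also have "\<dots> \<le> \<epsilon> * 2^n"
      proof -
        have "(\<Prod>i\<in>UNIV - {i0}. (2::real)) \<le> 2 ^ n"
          by (simp add: n_def card_Diff_subset)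
        then show ?thesis using e0 by (rule mult_left_mono)
      qed
      finally show ?thesis .
    qed
    ultimately have "pdom (\<Prod>i\<in>UNIV. fac A p i) (smult (\<epsilon> * 2^n) (\<Prod>i\<in>UNIV. U i))"
      by (metis (no_types, lifting) cle_smult2 nnP pdom_cle)
    moreover have "\<bar>real_of_int (sign p)\<bar> = 1" by (metis abs_sign of_int_abs of_int_1)
    ultimately show ?thesis using pdom_smult[of _ _ "of_int (sign p)"] by fastforce
  qed
  define P where "P = {p. p permutes (UNIV::'n set)} - {id}"
  define Rst where "Rst = (\<Sum>p\<in>P. smult (of_int (sign p)) (\<Prod>i\<in>UNIV. fac A p i))"
  have finP: "finite P" unfolding P_def by (simp add: finite_permutations)
  have cardP: "card P \<le> fact n"
  proof -
    have "card P \<le> card {p. p permutes (UNIV::'n set)}" unfolding P_def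
      by (intro card_mono) (auto simp: finite_permutations)
    also have "\<dots> = fact n" by (simp add: card_permutations n_def)
    finally show ?thesis .
  qed
  have "pdom Rst (\<Sum>p\<in>P. smult (\<epsilon> * 2^n) (\<Prod>i\<in>UNIV. U i))"
    unfolding Rst_def using nonid finP by (intro pdom_sum) (auto simp: P_def)
  moreover have "(\<Sum>p\<in>P. smult (\<epsilon> * 2^n) (\<Prod>i\<in>UNIV. U i)) = smult (real (card P) * (\<epsilon> * 2^n)) (\<Prod>i\<in>UNIV. U i)"
    by (simp only: smult_sum[symmetric] sum_constant)
  ultimately have rst: "pdom Rst (smult (real (card P) * (\<epsilon> * 2^n)) (\<Prod>i\<in>UNIV. U i))" by simp
  have eq: "charp A - pa a UNIV = (pa (\<lambda>i. A$i$i) UNIV - pa a UNIV) + Rst"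
    using charp_split[of A] by (simp add: Rst_def P_def)
  have d: "pdom ((pa (\<lambda>i. A$i$i) UNIV - pa a UNIV) + Rst)
      (smult ((1+\<epsilon>)^n - 1 + real (card P) * (\<epsilon> * 2^n)) (\<Prod>i\<in>UNIV. U i))"
    using pdom_add[OF idp rst] by (simp add: smult_add_left)
  have le: "(1+\<epsilon>)^n - 1 + real (card P) * (\<epsilon> * 2^n) \<le> (1 + fact n) * 2^n * \<epsilon>"
  proof -
    have "(1+\<epsilon>)^n - 1 \<le> (2^n - 1) * \<epsilon>" by (rule one_plus_pow'[OF e0 e1])
    also have "\<dots> \<le> 2^n * \<epsilon>" using e0 by (simp add: algebra_simps)
    finally have 1: "(1+\<epsilon>)^n - 1 \<le> 2^n * \<epsilon>" .
    have "real (card P) * (\<epsilon> * 2^n) \<le> fact n * (\<epsilon> * 2^n)"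
    proof (rule mult_right_mono)
      show "real (card P) \<le> fact n" using cardP by (metis of_nat_fact of_nat_le_iff)
      show "0 \<le> \<epsilon> * 2 ^ n" using e0 by simp
    qed
    with 1 show ?thesis by (simp add: algebra_simps)
  qed
  have "pdom (charp A - pa a UNIV) (smult ((1 + fact n) * 2^n * \<epsilon>) (\<Prod>i\<in>UNIV. U i))"
    using pdom_cle[OF d[folded eq] cle_smult2[OF nnP le]] .
  then show ?thesis by (simp add: A_def a_def pmU[symmetric] n_def)
qed



lemma O_small:
  fixes E :: "real \<Rightarrow> 'a::real_normed_vector"
  assumes "O_h_infty E" "t > 0"
  shows "\<forall>\<^sub>F h in at_right 0. norm (E h) \<le> t"
proof -
  obtain C where C: "\<forall>\<^sub>F h in at_right 0. norm (E h) \<le> C * h ^ 1"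
    using assms(1) unfolding O_h_infty_def by blast
  define d where "d = t / (\<bar>C\<bar> + 1)"
  have d0: "0 < d" using assms(2) by (simp add: d_def)
  have "\<forall>\<^sub>F h in at_right 0. h \<in> {0<..<d}" by (rule eventually_at_right_real[OF d0])
  then show ?thesis using C
  proof eventually_elim
    case (elim h)
    have h0: "0 < h" "h < d" using elim(1) by auto
    have "C * h \<le> \<bar>C\<bar> * h" using h0 by (intro mult_right_mono) auto
    also have "\<dots> \<le> \<bar>C\<bar> * d" using h0 by (intro mult_left_mono) auto
    finally have "C * h \<le> \<bar>C\<bar> * d" .
    also have "\<bar>C\<bar> * d \<le> t" using assms(2) by (simp add: d_def field_simps)
    finally show ?case using elim(2) by simp
  qed
qed

theorem lemma6p2:
  fixes \<nu> :: "'n::finite \<Rightarrow> real \<Rightarrow> complex"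
    and E :: "real \<Rightarrow> complex^'n^'n"
    and M :: "real \<Rightarrow> complex^'n^'n"
  assumes E_small: "O_h_infty E"
    and M_def: "\<And>h. M h = diag_mat (\<lambda>j. \<nu> j h) ** (mat 1 + E h) ** diag_mat (\<lambda>j. \<nu> j h)"
  shows "\<exists>lam :: real \<Rightarrow> 'n \<Rightarrow> complex. \<exists>r :: 'n \<Rightarrow> real \<Rightarrow> complex.
           (\<forall>h. eigenvalues_enum (M h) (lam h))
         \<and> (\<forall>\<^sub>F h in at_right 0. \<forall>j. lam h j = (\<nu> j h)\<^sup>2 * (1 + r j h))
         \<and> (\<forall>j. O_h_infty (r j))"
proof -
  define n where "n = CARD('n)"
  obtain p K \<theta>0 where m0: "0 < \<theta>0" "0 \<le> K" and m: "\<forall>(I::'n set) a b \<theta>. finite I \<longrightarrow> card I = n \<longrightarrow> 0 \<le> \<theta> \<longrightarrow> \<theta> \<le> \<theta>0 \<longrightarrow>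
        pdom (pa b I - pa a I) (smult (\<theta>^p) (pm a I)) \<longrightarrow>
        (\<exists>\<sigma>. \<sigma> permutes I \<and> (\<forall>j\<in>I. cmod (b (\<sigma> j) - a j) \<le> K * \<theta> * cmod (a j)))"
    using match_roots[where 'a='n, of n] by blast
  define Cn where "Cn = (1 + fact n) * (2::real)^n"
  have f0: "0 \<le> (fact n :: real)" by simp
  have f1: "0 < 1 + (fact n :: real)" using f0 by linarith
  have Cn0: "0 < Cn" unfolding Cn_def using f1 by (intro mult_pos_pos) auto
  define \<epsilon> where "\<epsilon> h = norm (E h)" for h
  define \<theta> where "\<theta> h = root (Suc p) (Cn * \<epsilon> h)" for h
  define \<theta>1 where "\<theta>1 = min \<theta>0 1"
  have th1: "0 < \<theta>1" "\<theta>1 \<le> \<theta>0" "\<theta>1 \<le> 1" using m0 by (auto simp: \<theta>1_def)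
  define t where "t = min 1 (\<theta>1^(Suc p) / Cn)"
  have t0: "0 < t" using th1 Cn0 by (simp add: t_def)
  define good where "good h \<longleftrightarrow> \<epsilon> h \<le> t" for h
  have "\<forall>h. \<exists>b. charp (M h) = pa b (UNIV::'n set)" using charp_roots by blast
  then obtain b where b: "\<And>h. charp (M h) = pa (b h) (UNIV::'n set)" by metis
  define a where "a h = (\<lambda>j. (\<nu> j h) ^ 2)" for h
  define S where "S h = (SOME \<sigma>. \<sigma> permutes (UNIV::'n set) \<and> (\<forall>j\<in>UNIV. cmod (b h (\<sigma> j) - a h j) \<le> K * \<theta> h * cmod (a h j)))" for h
  define lam where "lam h = (if good h then b h \<circ> S h else b h)" for h
  define r where "r j h = (if \<nu> j h = 0 then 0 else lam h j / (\<nu> j h)^2 - 1)" for j h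
  have th0: "0 \<le> \<theta> h" for h unfolding \<theta>_def using Cn0 by (intro real_root_ge_zero) (simp add: \<epsilon>_def)
  have goodS: "S h permutes UNIV \<and> (\<forall>j\<in>UNIV. cmod (b h (S h j) - a h j) \<le> K * \<theta> h * cmod (a h j))"
    if g: "good h" for h
  proof -
    have et: "\<epsilon> h \<le> t" using g by (simp add: good_def)
    have e1: "\<epsilon> h \<le> 1" using et by (simp add: t_def)
    have e0: "0 \<le> \<epsilon> h" by (simp add: \<epsilon>_def)
    have "Cn * \<epsilon> h \<le> Cn * (\<theta>1^(Suc p) / Cn)" using et Cn0 by (intro mult_left_mono) (auto simp: t_def)
    then have "Cn * \<epsilon> h \<le> \<theta>1^(Suc p)" using Cn0 by simp
    then have "\<theta> h \<le> root (Suc p) (\<theta>1^(Suc p))" unfolding \<theta>_def by (intro real_root_le_mono) auto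
    also have "\<dots> = \<theta>1" using th1 by (intro real_root_power_cancel) auto
    finally have thle: "\<theta> h \<le> \<theta>1" .
    have pw: "\<theta> h ^ Suc p = Cn * \<epsilon> h" unfolding \<theta>_def
      by (rule real_root_pow_pos2) (use Cn0 e0 in auto)
    have Bb: "\<And>i j. cmod (E h $ i $ j) \<le> \<epsilon> h"
      unfolding \<epsilon>_def
      using order_trans[OF Finite_Cartesian_Product.norm_nth_le Finite_Cartesian_Product.norm_nth_le] .
    have X: "pdom (charp (M h) - pa (a h) UNIV) (smult (Cn * \<epsilon> h) (pm (a h) UNIV))"
      using charp_bound[OF Bb e0 e1, of "\<lambda>j. \<nu> j h"] unfolding M_def[of h]
      by (simp add: a_def Cn_def n_def mult.assoc)
    have le: "Cn * \<epsilon> h \<le> \<theta> h ^ p" unfolding pw[symmetric]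
      using th0[of h] thle th1 by (simp add: mult_left_le_one_le)
    have Y: "pdom (pa (b h) UNIV - pa (a h) UNIV) (smult (\<theta> h ^ p) (pm (a h) UNIV))"
      using pdom_cle[OF X[unfolded b] cle_smult2[OF nneg_pm[OF finite_class.finite_UNIV] le]] .
    have cardU: "card (UNIV::'n set) = n" by (simp add: n_def)
    have tt: "\<theta> h \<le> \<theta>0" using thle th1 by simp
    from m[rule_format, OF finite_class.finite_UNIV cardU th0[of h] tt Y]
    have "\<exists>\<sigma>. \<sigma> permutes (UNIV::'n set) \<and> (\<forall>j\<in>UNIV. cmod (b h (\<sigma> j) - a h j) \<le> K * \<theta> h * cmod (a h j))" .
    then show ?thesis unfolding S_def by (rule someI_ex)
  qed
  have eig: "eigenvalues_enum (M h) (lam h)" for h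
    unfolding eigenvalues_enum_def
  proof
    fix x
    have "det (mat x - M h) = (\<Prod>j\<in>UNIV. x - b h j)"
      by (simp add: poly_charp[symmetric] b pa_poly)
    also have "\<dots> = (\<Prod>j\<in>UNIV. x - lam h j)"
    proof (cases "good h")
      case True
      then show ?thesis using prod.permute[OF goodS[OF True, THEN conjunct1], of "\<lambda>j. x - b h j"]
        by (simp add: lam_def comp_def)
    qed (simp add: lam_def)
    finally show "det (mat x - M h) = (\<Prod>j\<in>UNIV. x - lam h j)" .
  qed
  have evg: "\<forall>\<^sub>F h in at_right 0. good h"
    using O_small[OF E_small t0] by (simp add: good_def \<epsilon>_def)
  have part2: "\<forall>\<^sub>F h in at_right 0. \<forall>j. lam h j = (\<nu> j h)\<^sup>2 * (1 + r j h)"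
    using evg
  proof eventually_elim
    case (elim h)
    show ?case
    proof
      fix j
      show "lam h j = (\<nu> j h)\<^sup>2 * (1 + r j h)"
      proof (cases "\<nu> j h = 0")
        case True
        have "cmod (b h (S h j) - a h j) \<le> K * \<theta> h * cmod (a h j)" using goodS[OF elim] by blast
        then have "cmod (lam h j - 0) \<le> 0" using True by (simp add: lam_def elim a_def)
        then show ?thesis using True by (simp add: r_def)
      next
        case False
        then show ?thesis by (simp add: r_def field_simps)
      qed
    qed
  qed
  have part3: "O_h_infty (r j)" for j
    unfolding O_h_infty_def
  proof
    fix N :: nat
    obtain C' where C': "\<forall>\<^sub>F h in at_right 0. norm (E h) \<le> C' * h ^ (Suc p * N)"
      using E_small unfolding O_h_infty_def by blast
    define c where "c = root (Suc p) (Cn * max C' 0)"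
    have c0: "0 \<le> c" unfolding c_def using Cn0 by (intro real_root_ge_zero) auto
    have "\<forall>\<^sub>F h in at_right 0. norm (r j h) \<le> (K * c) * h ^ N"
      using evg C' eventually_at_right_less[of "0::real"]
    proof eventually_elim
      case (elim h)
      have hp: "0 < h" using elim(3) by simp
      have "\<theta> h \<le> root (Suc p) (Cn * (max C' 0 * (h ^ N) ^ Suc p))"
        unfolding \<theta>_def
      proof (rule real_root_le_mono, simp, rule mult_left_mono)
        have "\<epsilon> h \<le> C' * h ^ (Suc p * N)" using elim(2) by (simp add: \<epsilon>_def)
        also have "\<dots> \<le> max C' 0 * h ^ (Suc p * N)" using hp by (intro mult_right_mono) auto
        also have "\<dots> = max C' 0 * (h ^ N) ^ Suc p" unfolding power_mult[symmetric] by (simp only: mult.commute)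
        finally show "\<epsilon> h \<le> max C' 0 * (h ^ N) ^ Suc p" .
      qed (use Cn0 in simp)
      also have "\<dots> = c * h ^ N"
      proof -
        have "root (Suc p) ((h ^ N) ^ Suc p) = h ^ N" using hp by (intro real_root_power_cancel) auto
        then show ?thesis unfolding c_def mult.assoc[symmetric] real_root_mult by simp
      qed
      finally have thc: "\<theta> h \<le> c * h ^ N" .
      show ?case
      proof (cases "\<nu> j h = 0")
        case True
        then show ?thesis using m0 c0 hp by (simp add: r_def)
      next
        case False
        have nz: "cmod (a h j) > 0" using False by (simp add: a_def)
        have "cmod (lam h j - a h j) \<le> K * \<theta> h * cmod (a h j)"
          using goodS[OF elim(1)] by (simp add: lam_def elim(1))
        then have "cmod (lam h j - a h j) / cmod (a h j) \<le> K * \<theta> h"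
          using nz by (simp add: divide_le_eq)
        moreover have "r j h = (lam h j - a h j) / a h j"
          using False by (simp add: r_def a_def field_simps)
        ultimately have "norm (r j h) \<le> K * \<theta> h" by (simp add: norm_divide)
        also have "\<dots> \<le> K * (c * h ^ N)" using m0 thc by (intro mult_left_mono) auto
        finally show ?thesis by simp
      qed
    qed
    then show "\<exists>C. \<forall>\<^sub>F h in at_right 0. norm (r j h) \<le> C * h ^ N" by blast
  qed
  show ?thesis by (intro exI[of _ lam] exI[of _ r] conjI allI) (use eig part2 part3 in auto)
qed


end
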